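(* Let $0<\mu<L$ and let $m(z)=z^n+\sum_{i=0}^{n-1}m_iz^i\in\mathbb{R}[z]$ be monic of degree $n$ with all roots on the unit circle. Consider optimization filters of the form $C(z)=c(z)I_d$ with $c(z)=d(z)/m(z)$, $d(z)\in\mathbb{R}[z]$, $\deg d<n$. For such a filter and a symmetric $A$ with eigenvalues $\lambda_1,\dots,\lambda_d\in[\mu,L]$, the closed-loop poles of the algorithm (i.e., the poles of the transfer functions from $B(z)$ to the iterates in the eigenbasis of $A$) are the roots of the polynomials $m(z)-\lambda_i d(z)$, $i=1,\dots,d$. Consequently, the optimal worst-case convergence rate achievable by any such minimal-order algorithm, over all $A$ with eigenvalues in $[\mu,L]$, equals $$\rho=\min_{d(z)\in\mathbb{R}[z],\ \deg d<n}\ \max_{\lambda\in[\mu,L]}\ \max\{|z| : m(z)-\lambda d(z)=0\}.$$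
   Context: Time-varying objective: $f_k(x)=\tfrac12 x^\top A x+b_k^\top x$ with $A\in\mathbb{R}^{d\times d}$ symmetric, eigenvalues in $[\mu,L]$, and $\{b_k\}$ having $\mathcal{Z}$-transform $B(z)=B_N(z)/m(z)$, $B_N\in\mathbb{R}^d[z]$. The algorithm generates iterates $x_k$ (zero initial internal state) whose $\mathcal{Z}$-transform satisfies $X(z)=C(z)(AX(z)+B(z))$. The convergence rate (root-convergence factor) is $\limsup_{k\to\infty}\|x_k-x_k^\star\|^{1/k}$ where $x_k^\star=-A^{-1}b_k$, and for an LTI system it is identified with the maximum modulus of the poles of its transfer function. *)

theory Defs
  imports "Jordan_Normal_Form.Char_Poly"
begin

definition cpoly :: "real poly \<Rightarrow> complex poly" where
  "cpoly p = map_poly complex_of_real p"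

definition sym_spec :: "nat \<Rightarrow> real \<Rightarrow> real \<Rightarrow> real mat \<Rightarrow> bool" where
  "sym_spec ndim mu L A \<longleftrightarrow> A \<in> carrier_mat ndim ndim \<and> A\<^sup>T = A \<and>
     (\<forall>k. eigenvalue (map_mat complex_of_real A) k \<longrightarrow> k \<in> complex_of_real ` {mu..L})"

text \<open>Closed-loop characteristic polynomial of the algorithm X = C (A X + B) with
  C(z) = (dp(z)/m(z)) I: the denominator of the closed-loop transfer function
  (I - C(z) A)^{-1} C(z) = dp(z) (m(z) I - dp(z) A)^{-1}, i.e. det (m(z) I - dp(z) A).\<close>
definition closed_loop_charpoly :: "real poly \<Rightarrow> real poly \<Rightarrow> real mat \<Rightarrow> complex poly" where
  "closed_loop_charpoly m dp A =
     det (mat (dim_row A) (dim_row A)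
       (\<lambda>(i,j). (if i = j then cpoly m else 0) - Polynomial.smult (complex_of_real (A $$ (i,j))) (cpoly dp)))"

definition closed_loop_poles :: "real poly \<Rightarrow> real poly \<Rightarrow> real mat \<Rightarrow> complex set" where
  "closed_loop_poles m dp A = {z. poly (closed_loop_charpoly m dp A) z = 0}"

definition alg_rate :: "real poly \<Rightarrow> real poly \<Rightarrow> real mat \<Rightarrow> real" where
  "alg_rate m dp A = Max (norm ` closed_loop_poles m dp A)"

definition worst_rate :: "nat \<Rightarrow> real \<Rightarrow> real \<Rightarrow> real poly \<Rightarrow> real poly \<Rightarrow> real" where
  "worst_rate ndim mu L m dp = (SUP A\<in>{A. sym_spec ndim mu L A}. alg_rate m dp A)"

definition optimal_rate :: "nat \<Rightarrow> real \<Rightarrow> real \<Rightarrow> real poly \<Rightarrow> real" where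
  "optimal_rate ndim mu L m = (INF dp\<in>{dp. degree dp < degree m}. worst_rate ndim mu L m dp)"

definition root_set :: "real poly \<Rightarrow> real poly \<Rightarrow> real \<Rightarrow> complex set" where
  "root_set m dp lam = {z. poly (cpoly (m - Polynomial.smult lam dp)) z = 0}"

definition max_root_mod :: "real poly \<Rightarrow> real poly \<Rightarrow> real \<Rightarrow> real" where
  "max_root_mod m dp lam = Max (norm ` root_set m dp lam)"

definition worst_root_mod :: "real \<Rightarrow> real \<Rightarrow> real poly \<Rightarrow> real poly \<Rightarrow> real" where
  "worst_root_mod mu L m dp = (SUP lam\<in>{mu..L}. max_root_mod m dp lam)"

end

theory Submission
  imports Defs "HOL-Analysis.Topology_Euclidean_Space" "Jordan_Normal_Form.Spectral_Radius"
begin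


lemma cpoly_lin: "cpoly (m - Polynomial.smult lam dp) = cpoly m - Polynomial.smult (of_real lam) (cpoly dp)"
  by (rule poly_eqI) (simp add: cpoly_def coeff_map_poly)

lemma poly_cpoly_lin: "poly (cpoly (m - Polynomial.smult lam dp)) z = poly (cpoly m) z - of_real lam * poly (cpoly dp) z"
  by (simp add: cpoly_lin)

lemma coeff_cpoly: "coeff (cpoly p) i = of_real (coeff p i)"
  by (simp add: cpoly_def coeff_map_poly)

lemma degree_cpoly: "degree (cpoly p) = degree p"
  unfolding cpoly_def by (rule degree_map_poly) simp

lemma P_props:
  assumes "lead_coeff m = 1" "degree dp < degree m"
  shows "degree (cpoly (m - Polynomial.smult lam dp)) = degree m"
        "lead_coeff (cpoly (m - Polynomial.smult lam dp)) = 1"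
proof -
  have d: "degree (Polynomial.smult lam dp) < degree m" using assms(2) degree_smult_le le_less_trans by blast
  have "degree (m - Polynomial.smult lam dp) = degree m"
    using d by (metis degree_add_eq_left degree_minus diff_conv_add_uminus)
  thus 1: "degree (cpoly (m - Polynomial.smult lam dp)) = degree m" by (simp add: degree_cpoly)
  have "coeff (Polynomial.smult lam dp) (degree m) = 0" using d coeff_eq_0 by blast
  thus "lead_coeff (cpoly (m - Polynomial.smult lam dp)) = 1" unfolding 1
    using assms(1) by (simp add: coeff_cpoly)
qed

lemma prod_list_ge_pow:
  fixes f :: "'a \<Rightarrow> real"
  assumes "0 \<le> d" "\<forall>x\<in>set xs. d \<le> f x"
  shows "d ^ length xs \<le> prod_list (map f xs)"
  using assms
proof (induction xs)
  case Nil then show ?case by simp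
next
  case (Cons a xs)
  then have "d ^ length xs \<le> prod_list (map f xs)" by simp
  moreover have "d \<le> f a" using Cons by simp
  ultimately show ?case using Cons(2) by (simp add: mult_mono)
qed

lemma norm_prod_list_c: "norm (prod_list (map (f :: 'a \<Rightarrow> complex) xs)) = prod_list (map (\<lambda>x. norm (f x)) xs)"
  by (induction xs) (auto simp: norm_mult)

lemma near_root:
  fixes q :: "complex poly"
  assumes "lead_coeff q = 1" "degree q \<ge> 1"
  shows "\<exists>a. poly q a = 0 \<and> norm (z - a) ^ degree q \<le> norm (poly q z)"
proof -
  obtain as where as: "Polynomial.smult (lead_coeff q) (\<Prod>a\<leftarrow>as. [:- a, 1:]) = q" "length as = degree q"
    using fundamental_theorem_algebra_factorized[of q] by blast
  have qe: "q = (\<Prod>a\<leftarrow>as. [:- a, 1:])" using as(1) assms(1) by simp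
  have pq: "poly q x = (\<Prod>a\<leftarrow>as. x - a)" for x
    unfolding qe poly_prod_list by (simp add: o_def)
  have ne: "as \<noteq> []" using as(2) assms(2) by auto
  define d where "d = Min (set (map (\<lambda>a. norm (z - a)) as))"
  have "d \<in> set (map (\<lambda>a. norm (z - a)) as)" unfolding d_def using ne by (intro Min_in) auto
  then obtain a where a: "a \<in> set as" "d = norm (z - a)" by auto
  have root: "poly q a = 0" unfolding pq using a(1)
    by (induction as) auto
  have dle: "\<forall>x\<in>set as. d \<le> norm (z - x)" unfolding d_def by (auto intro!: Min_le)
  have "d ^ length as \<le> prod_list (map (\<lambda>a. norm (z - a)) as)"
    by (rule prod_list_ge_pow) (use dle a(2) in auto)
  also have "\<dots> = norm (poly q z)" unfolding pq by (simp add: norm_prod_list_c o_def)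
  finally show ?thesis using root a as(2) by auto
qed

lemma lin_mult: "[:- a, 1:] * Q = Polynomial.smult (- a) Q + pCons 0 (Q :: complex poly)"
  by (simp add: mult_pCons_left)

lemma coeff_prod_lin_bound:
  fixes as :: "complex list"
  assumes "\<forall>a\<in>set as. norm a \<le> R" "0 \<le> R"
  shows "norm (coeff (\<Prod>a\<leftarrow>as. [:- a, 1:]) i) \<le> (1 + R) ^ length as"
  using assms
proof (induction as arbitrary: i)
  case Nil then show ?case by (cases i) auto
next
  case (Cons a as)
  define Q where "Q = (\<Prod>a\<leftarrow>as. [:- a, 1:])"
  have IH: "norm (coeff Q j) \<le> (1 + R) ^ length as" for j using Cons unfolding Q_def by simp
  have na: "norm a \<le> R" using Cons by simp
  have "coeff (\<Prod>a\<leftarrow>a # as. [:- a, 1:]) i = - a * coeff Q i + coeff (pCons 0 Q) i"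
    by (simp add: Q_def lin_mult)
  also have "norm \<dots> \<le> norm a * norm (coeff Q i) + norm (coeff (pCons 0 Q) i)"
    by (metis norm_mult norm_minus_cancel norm_triangle_ineq)
  also have "\<dots> \<le> R * (1 + R) ^ length as + (1 + R) ^ length as"
  proof (rule add_mono)
    show "norm a * norm (coeff Q i) \<le> R * (1 + R) ^ length as"
      using na IH[of i] Cons(3) by (intro mult_mono) auto
    show "norm (coeff (pCons 0 Q) i) \<le> (1 + R) ^ length as"
      using IH Cons(3) by (cases i) auto
  qed
  also have "\<dots> = (1 + R) ^ length (a # as)" by (simp add: algebra_simps)
  finally show ?case .
qed

lemma coeff_bound_roots:
  fixes q :: "complex poly"
  assumes "lead_coeff q = 1" "0 \<le> R" "\<forall>a. poly q a = 0 \<longrightarrow> norm a \<le> R"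
  shows "norm (coeff q i) \<le> (1 + R) ^ degree q"
proof -
  obtain as where as: "Polynomial.smult (lead_coeff q) (\<Prod>a\<leftarrow>as. [:- a, 1:]) = q" "length as = degree q"
    using fundamental_theorem_algebra_factorized[of q] by blast
  have qe: "q = (\<Prod>a\<leftarrow>as. [:- a, 1:])" using as(1) assms(1) by simp
  have pq: "poly q x = (\<Prod>a\<leftarrow>as. x - a)" for x
    unfolding qe poly_prod_list by (simp add: o_def)
  have "\<forall>a\<in>set as. norm a \<le> R"
  proof
    fix a assume "a \<in> set as"
    hence "poly q a = 0" unfolding pq by (induction as) auto
    thus "norm a \<le> R" using assms(3) by auto
  qed
  from coeff_prod_lin_bound[OF this assms(2), of i] show ?thesis using qe as(2) by simp
qed

lemma cauchy_bound:
  fixes q :: "complex poly"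
  assumes "lead_coeff q = 1" "degree q \<ge> 1" "poly q z = 0"
  shows "norm z \<le> max 1 (\<Sum>i<degree q. norm (coeff q i))"
proof (cases "norm z \<le> 1")
  case True then show ?thesis by simp
next
  case False
  define n where "n = degree q"
  define S where "S = (\<Sum>i<n. norm (coeff q i))"
  have "poly q z = (\<Sum>i<Suc n. coeff q i * z ^ i)"
    unfolding poly_altdef n_def lessThan_Suc_atMost ..
  also have "\<dots> = (\<Sum>i<n. coeff q i * z ^ i) + z ^ n"
    using assms(1) by (simp add: n_def)
  finally have e: "z ^ n = - (\<Sum>i<n. coeff q i * z ^ i)" using assms(3) by (simp add: eq_neg_iff_add_eq_0 add.commute)
  have "norm z ^ n = norm (\<Sum>i<n. coeff q i * z ^ i)" using arg_cong[OF e, of norm] by (simp only: norm_minus_cancel norm_power)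
  also have "\<dots> \<le> (\<Sum>i<n. norm (coeff q i) * norm z ^ i)"
    by (rule order_trans[OF norm_sum]) (simp add: norm_mult norm_power)
  also have "\<dots> \<le> (\<Sum>i<n. norm (coeff q i) * norm z ^ (n - 1))"
    using False by (intro sum_mono mult_left_mono power_increasing) auto
  also have "\<dots> = S * norm z ^ (n - 1)" unfolding S_def by (simp add: sum_distrib_right)
  moreover obtain k where k: "n = Suc k" using assms(2) unfolding n_def by (metis Suc_le_D One_nat_def)
  ultimately have "norm z * norm z ^ (n - 1) \<le> S * norm z ^ (n - 1)" by simp
  moreover have "0 < norm z ^ (n - 1)" using False by (intro zero_less_power) (auto simp: not_le)
  ultimately have "norm z \<le> S" by (simp add: mult_le_cancel_right)
  thus ?thesis unfolding S_def n_def by simp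
qed



lemma root_set_iff: "z \<in> root_set m dp l \<longleftrightarrow> poly (cpoly m) z - of_real l * poly (cpoly dp) z = 0"
  unfolding root_set_def by (simp add: poly_cpoly_lin)

lemma root_set_basic:
  assumes "lead_coeff m = 1" "degree dp < degree m" "degree m \<ge> 1"
  shows "finite (root_set m dp lam)" "root_set m dp lam \<noteq> {}"
proof -
  let ?q = "cpoly (m - Polynomial.smult lam dp)"
  have d: "degree ?q = degree m" "lead_coeff ?q = 1" using P_props[OF assms(1,2)] by auto
  hence "?q \<noteq> 0" by auto
  thus "finite (root_set m dp lam)" unfolding root_set_def by (rule poly_roots_finite)
  have "\<not> constant (poly ?q)" using d assms(3) by (simp add: constant_degree)
  from fundamental_theorem_of_algebra[OF this] show "root_set m dp lam \<noteq> {}"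
    unfolding root_set_def by auto
qed

lemma max_root_mod_props:
  assumes "lead_coeff m = 1" "degree dp < degree m" "degree m \<ge> 1"
  shows "max_root_mod m dp lam \<in> norm ` root_set m dp lam"
    "\<And>z. z \<in> root_set m dp lam \<Longrightarrow> norm z \<le> max_root_mod m dp lam"
    "0 \<le> max_root_mod m dp lam"
proof -
  note b = root_set_basic[OF assms, of lam]
  show 1: "max_root_mod m dp lam \<in> norm ` root_set m dp lam"
    unfolding max_root_mod_def using b by (intro Max_in) auto
  show "\<And>z. z \<in> root_set m dp lam \<Longrightarrow> norm z \<le> max_root_mod m dp lam"
    unfolding max_root_mod_def using b by (intro Max_ge) auto
  show "0 \<le> max_root_mod m dp lam" using 1 by auto
qed

lemma root_bound:
  assumes "lead_coeff m = 1" "degree dp < degree m" "degree m \<ge> 1"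
    and "\<bar>lam\<bar> \<le> Lam" and "z \<in> root_set m dp lam"
  shows "norm z \<le> max 1 (\<Sum>i<degree m. \<bar>coeff m i\<bar> + Lam * \<bar>coeff dp i\<bar>)"
proof -
  let ?q = "cpoly (m - Polynomial.smult lam dp)"
  have d: "degree ?q = degree m" "lead_coeff ?q = 1" using P_props[OF assms(1,2)] by auto
  have "norm z \<le> max 1 (\<Sum>i<degree ?q. norm (coeff ?q i))"
    using assms(5) d assms(3) unfolding root_set_def by (intro cauchy_bound) auto
  also have "(\<Sum>i<degree ?q. norm (coeff ?q i)) \<le> (\<Sum>i<degree m. \<bar>coeff m i\<bar> + Lam * \<bar>coeff dp i\<bar>)"
    unfolding d(1)
  proof (rule sum_mono)
    fix i
    have "norm (coeff ?q i) = \<bar>coeff m i - lam * coeff dp i\<bar>" unfolding coeff_cpoly norm_of_real by simp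
    also have "\<dots> \<le> \<bar>coeff m i\<bar> + \<bar>lam\<bar> * \<bar>coeff dp i\<bar>" using abs_triangle_ineq4[of "coeff m i" "lam * coeff dp i"] by (simp add: abs_mult)
    also have "\<dots> \<le> \<bar>coeff m i\<bar> + Lam * \<bar>coeff dp i\<bar>" using assms(4) by (simp add: mult_right_mono)
    finally show "norm (coeff ?q i) \<le> \<bar>coeff m i\<bar> + Lam * \<bar>coeff dp i\<bar>" .
  qed
  finally show ?thesis by simp
qed

lemma attain:
  assumes "lead_coeff m = 1" "degree dp < degree m" "degree m \<ge> 1" "mu \<le> L"
  shows "\<exists>lam\<in>{mu..L}. \<forall>l\<in>{mu..L}. max_root_mod m dp l \<le> max_root_mod m dp lam"
proof -
  define Lam where "Lam = max \<bar>mu\<bar> \<bar>L\<bar>"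
  define R where "R = max 1 (\<Sum>i<degree m. \<bar>coeff m i\<bar> + Lam * \<bar>coeff dp i\<bar>)"
  define K where "K = {p :: real \<times> complex. mu \<le> fst p \<and> fst p \<le> L \<and>
      poly (cpoly m) (snd p) - of_real (fst p) * poly (cpoly dp) (snd p) = 0}"
  have Kiff: "(l, z) \<in> K \<longleftrightarrow> l \<in> {mu..L} \<and> z \<in> root_set m dp l" for l z
    unfolding K_def root_set_iff by auto
  have "closed K" unfolding K_def
    by (intro closed_Collect_conj closed_Collect_le closed_Collect_eq continuous_intros)
  moreover have "bounded K"
  proof (rule bounded_subset)
    show "bounded ({mu..L} \<times> cball 0 R)" by (intro bounded_Times compact_imp_bounded[OF compact_Icc]) auto
    show "K \<subseteq> {mu..L} \<times> cball 0 R"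
    proof
      fix p assume "p \<in> K"
      then obtain l z where p: "p = (l, z)" "l \<in> {mu..L}" "z \<in> root_set m dp l"
        using Kiff by (cases p) auto
      have "\<bar>l\<bar> \<le> Lam" using p(2) unfolding Lam_def by auto
      from root_bound[OF assms(1-3) this p(3)] show "p \<in> {mu..L} \<times> cball 0 R"
        using p unfolding R_def by auto
    qed
  qed
  ultimately have cK: "compact K" by (simp add: compact_eq_bounded_closed)
  obtain z0 where "z0 \<in> root_set m dp mu" using root_set_basic[OF assms(1-3), of mu] by auto
  hence "(mu, z0) \<in> K" using assms(4) Kiff by auto
  hence "K \<noteq> {}" by auto
  have "continuous_on K (\<lambda>p. norm (snd p))" by (intro continuous_intros)
  from continuous_attains_sup[OF cK \<open>K \<noteq> {}\<close> this]
  obtain p0 where p0: "p0 \<in> K" "\<forall>y\<in>K. norm (snd y) \<le> norm (snd p0)"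
    by blast
  obtain lam0 w0 where lw: "p0 = (lam0, w0)" by (cases p0)
  have lam0: "lam0 \<in> {mu..L}" "w0 \<in> root_set m dp lam0" using p0(1) lw Kiff by auto
  show ?thesis
  proof (intro bexI[OF _ lam0(1)] ballI)
    fix l assume l: "l \<in> {mu..L}"
    obtain w where w: "w \<in> root_set m dp l" "max_root_mod m dp l = norm w"
      using max_root_mod_props(1)[OF assms(1-3), of l] by auto
    have "(l, w) \<in> K" using Kiff l w by auto
    hence "norm w \<le> norm w0" using p0(2) lw by force
    also have "\<dots> \<le> max_root_mod m dp lam0" using max_root_mod_props(2)[OF assms(1-3) lam0(2)] .
    finally show "max_root_mod m dp l \<le> max_root_mod m dp lam0" using w by simp
  qed
qed

lemma worst_eq:
  assumes "lead_coeff m = 1" "degree dp < degree m" "degree m \<ge> 1" "mu \<le> L"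
  shows "\<exists>lam0\<in>{mu..L}. worst_root_mod mu L m dp = max_root_mod m dp lam0"
    "\<And>l. l \<in> {mu..L} \<Longrightarrow> max_root_mod m dp l \<le> worst_root_mod mu L m dp"
    "0 \<le> worst_root_mod mu L m dp"
proof -
  obtain lam0 where lam0: "lam0 \<in> {mu..L}" "\<forall>l\<in>{mu..L}. max_root_mod m dp l \<le> max_root_mod m dp lam0"
    using attain[OF assms] by blast
  have e: "worst_root_mod mu L m dp = max_root_mod m dp lam0"
    unfolding worst_root_mod_def using lam0 by (intro cSup_eq_maximum) auto
  thus "\<exists>lam0\<in>{mu..L}. worst_root_mod mu L m dp = max_root_mod m dp lam0" using lam0 by auto
  show "\<And>l. l \<in> {mu..L} \<Longrightarrow> max_root_mod m dp l \<le> worst_root_mod mu L m dp"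
    using e lam0 by auto
  show "0 \<le> worst_root_mod mu L m dp" using e max_root_mod_props(3)[OF assms(1-3)] by simp
qed



lemma poly_clcp:
  assumes "A \<in> carrier_mat n n"
  shows "poly (closed_loop_charpoly m dp A) z =
    det (Matrix.mat n n (\<lambda>(i,j). (if i = j then poly (cpoly m) z else 0)
        - poly (cpoly dp) z * map_mat complex_of_real A $$ (i,j)))"
  unfolding closed_loop_charpoly_def using assms
  by (intro poly_det_cong[of _ n]) (auto simp: mult.commute)

lemma det_E:
  fixes Ac :: "complex mat"
  assumes Ac: "Ac \<in> carrier_mat n n"
  shows "det (Matrix.mat n n (\<lambda>(i,j). (if i = j then a else 0) - b * Ac $$ (i,j))) = 0 \<longleftrightarrow>
     (if b = 0 then a ^ n = 0 else eigenvalue Ac (a / b))"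
proof (cases "b = 0")
  case True
  have "Matrix.mat n n (\<lambda>(i,j). (if i = j then a else 0) - b * Ac $$ (i,j)) = a \<cdot>\<^sub>m 1\<^sub>m n"
    using True by (intro eq_matI) auto
  then show ?thesis using True by simp
next
  case False
  have "Matrix.mat n n (\<lambda>(i,j). (if i = j then a else 0) - b * Ac $$ (i,j)) = (- b) \<cdot>\<^sub>m char_matrix Ac (a / b)"
    using False Ac by (intro eq_matI) (auto simp: char_matrix_def field_simps)
  then show ?thesis using False Ac by (simp add: eigenvalue_det[OF Ac])
qed

lemma poles_eq:
  assumes "sym_spec ndim mu L A" "ndim \<ge> 1"
  shows "closed_loop_poles m dp A =
    (\<Union>lam\<in>{lam. eigenvalue (map_mat complex_of_real A) (complex_of_real lam)}. root_set m dp lam)"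
proof -
  define Ac where "Ac = map_mat complex_of_real A"
  have A: "A \<in> carrier_mat ndim ndim" and ev: "\<And>k. eigenvalue Ac k \<Longrightarrow> k \<in> complex_of_real ` {mu..L}"
    using assms(1) unfolding sym_spec_def Ac_def by auto
  have Ac: "Ac \<in> carrier_mat ndim ndim" using A unfolding Ac_def by auto
  obtain k0 where k0: "eigenvalue Ac k0" using spectrum_non_empty[OF Ac] assms(2)
    unfolding spectrum_def by auto
  show ?thesis
  proof (intro equalityI subsetI)
    fix z assume "z \<in> closed_loop_poles m dp A"
    hence "det (Matrix.mat ndim ndim (\<lambda>(i,j). (if i = j then poly (cpoly m) z else 0)
        - poly (cpoly dp) z * Ac $$ (i,j))) = 0"
      unfolding closed_loop_poles_def Ac_def using poly_clcp[OF A] by simp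
    hence c: "if poly (cpoly dp) z = 0 then poly (cpoly m) z ^ ndim = 0
       else eigenvalue Ac (poly (cpoly m) z / poly (cpoly dp) z)" unfolding det_E[OF Ac] .
    show "z \<in> (\<Union>lam\<in>{lam. eigenvalue (map_mat complex_of_real A) (complex_of_real lam)}. root_set m dp lam)"
    proof (cases "poly (cpoly dp) z = 0")
      case True
      then have "poly (cpoly m) z = 0" using c by simp
      obtain lam where "k0 = of_real lam" using ev[OF k0] by auto
      then show ?thesis using k0 True \<open>poly (cpoly m) z = 0\<close>
        by (auto simp: root_set_iff Ac_def)
    next
      case False
      then have e: "eigenvalue Ac (poly (cpoly m) z / poly (cpoly dp) z)" using c by simp
      obtain lam where lam: "poly (cpoly m) z / poly (cpoly dp) z = of_real lam" using ev[OF e] by auto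
      then have "poly (cpoly m) z - of_real lam * poly (cpoly dp) z = 0" using False
        by (simp add: field_simps)
      then show ?thesis using e lam by (auto simp: root_set_iff Ac_def)
    qed
  next
    fix z assume "z \<in> (\<Union>lam\<in>{lam. eigenvalue (map_mat complex_of_real A) (complex_of_real lam)}. root_set m dp lam)"
    then obtain lam where lam: "eigenvalue Ac (of_real lam)"
      "poly (cpoly m) z - of_real lam * poly (cpoly dp) z = 0"
      by (auto simp: root_set_iff Ac_def)
    have "if poly (cpoly dp) z = 0 then poly (cpoly m) z ^ ndim = 0
       else eigenvalue Ac (poly (cpoly m) z / poly (cpoly dp) z)"
    proof (cases "poly (cpoly dp) z = 0")
      case True then show ?thesis using lam(2) assms(2) by simp
    next
      case False
      then have "poly (cpoly m) z / poly (cpoly dp) z = of_real lam" using lam(2)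
        by (simp add: field_simps)
      then show ?thesis using False lam(1) by simp
    qed
    then show "z \<in> closed_loop_poles m dp A"
      unfolding closed_loop_poles_def det_E[OF Ac, symmetric] using poly_clcp[OF A] by (simp add: Ac_def)
  qed
qed



lemma eigenvalue_scalar:
  assumes "n \<ge> 1"
  shows "eigenvalue (c \<cdot>\<^sub>m 1\<^sub>m n) k \<longleftrightarrow> k = (c :: complex)"
proof -
  have C: "c \<cdot>\<^sub>m 1\<^sub>m n \<in> carrier_mat n n" by auto
  have "char_matrix (c \<cdot>\<^sub>m 1\<^sub>m n) k = (c - k) \<cdot>\<^sub>m 1\<^sub>m n"
    by (intro eq_matI) (auto simp: char_matrix_def)
  hence "det (char_matrix (c \<cdot>\<^sub>m 1\<^sub>m n) k) = (c - k) ^ n" by simp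
  thus ?thesis unfolding eigenvalue_det[OF C] using assms by auto
qed

lemma alg_rate_le:
  assumes "lead_coeff m = 1" "degree dp < degree m" "degree m \<ge> 1" "mu \<le> L"
    and "sym_spec ndim mu L A" "ndim \<ge> 1"
  shows "alg_rate m dp A \<le> worst_root_mod mu L m dp"
proof -
  define Ac where "Ac = map_mat complex_of_real A"
  have A: "A \<in> carrier_mat ndim ndim" and ev: "\<And>k. eigenvalue Ac k \<Longrightarrow> k \<in> complex_of_real ` {mu..L}"
    using assms(5) unfolding sym_spec_def Ac_def by auto
  have Ac: "Ac \<in> carrier_mat ndim ndim" using A unfolding Ac_def by auto
  define Lset where "Lset = {lam. eigenvalue Ac (complex_of_real lam)}"
  have Lrange: "lam \<in> {mu..L}" if "lam \<in> Lset" for lam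
    using ev[of "of_real lam"] that unfolding Lset_def by auto
  have "complex_of_real ` Lset \<subseteq> spectrum Ac" unfolding Lset_def spectrum_def by auto
  hence "finite (complex_of_real ` Lset)" using card_finite_spectrum(1)[OF Ac] finite_subset by blast
  hence finL: "finite Lset" by (rule finite_imageD) (auto simp: inj_on_def)
  obtain k0 where k0: "eigenvalue Ac k0" using spectrum_non_empty[OF Ac] assms(6)
    unfolding spectrum_def by auto
  obtain lam0 where "k0 = of_real lam0" using ev[OF k0] by auto
  hence l0: "lam0 \<in> Lset" using k0 unfolding Lset_def by auto
  have P: "closed_loop_poles m dp A = (\<Union>lam\<in>Lset. root_set m dp lam)"
    unfolding Lset_def Ac_def by (rule poles_eq[OF assms(5,6)])
  have fin: "finite (closed_loop_poles m dp A)" unfolding P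
    using finL root_set_basic(1)[OF assms(1-3)] by auto
  have ne: "closed_loop_poles m dp A \<noteq> {}" unfolding P
    using l0 root_set_basic(2)[OF assms(1-3)] by auto
  show ?thesis unfolding alg_rate_def
  proof (subst Max_le_iff)
    show "finite (norm ` closed_loop_poles m dp A)" using fin by auto
    show "norm ` closed_loop_poles m dp A \<noteq> {}" using ne by auto
    show "\<forall>a\<in>norm ` closed_loop_poles m dp A. a \<le> worst_root_mod mu L m dp"
    proof
      fix a assume "a \<in> norm ` closed_loop_poles m dp A"
      then obtain z lam where z: "a = norm z" "lam \<in> Lset" "z \<in> root_set m dp lam" unfolding P by auto
      have "norm z \<le> max_root_mod m dp lam" by (rule max_root_mod_props(2)[OF assms(1-3) z(3)])
      also have "\<dots> \<le> worst_root_mod mu L m dp" using worst_eq(2)[OF assms(1-4) Lrange[OF z(2)]] .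
      finally show "a \<le> worst_root_mod mu L m dp" using z by simp
    qed
  qed
qed

lemma A0_props:
  assumes "lam0 \<in> {mu..L}" "ndim \<ge> 1"
  shows "sym_spec ndim mu L (lam0 \<cdot>\<^sub>m 1\<^sub>m ndim)"
    "alg_rate m dp (lam0 \<cdot>\<^sub>m 1\<^sub>m ndim) = max_root_mod m dp lam0"
proof -
  have M: "map_mat complex_of_real (lam0 \<cdot>\<^sub>m 1\<^sub>m ndim) = of_real lam0 \<cdot>\<^sub>m 1\<^sub>m ndim"
    by (intro eq_matI) auto
  have T: "transpose_mat (lam0 \<cdot>\<^sub>m 1\<^sub>m ndim) = lam0 \<cdot>\<^sub>m 1\<^sub>m ndim"
    by (intro eq_matI) auto
  show S: "sym_spec ndim mu L (lam0 \<cdot>\<^sub>m 1\<^sub>m ndim)"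
    unfolding sym_spec_def M T eigenvalue_scalar[OF assms(2)] using assms(1) by auto
  have "closed_loop_poles m dp (lam0 \<cdot>\<^sub>m 1\<^sub>m ndim) = (\<Union>lam\<in>{lam0}. root_set m dp lam)"
    unfolding poles_eq[OF S assms(2)] M eigenvalue_scalar[OF assms(2)] by simp
  thus "alg_rate m dp (lam0 \<cdot>\<^sub>m 1\<^sub>m ndim) = max_root_mod m dp lam0"
    unfolding alg_rate_def max_root_mod_def by simp
qed

lemma worst_rate_eq:
  assumes "lead_coeff m = 1" "degree dp < degree m" "degree m \<ge> 1" "mu \<le> L" "ndim \<ge> 1"
  shows "worst_rate ndim mu L m dp = worst_root_mod mu L m dp"
proof -
  obtain lam0 where lam0: "lam0 \<in> {mu..L}" "worst_root_mod mu L m dp = max_root_mod m dp lam0"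
    using worst_eq(1)[OF assms(1-4)] by blast
  show ?thesis unfolding worst_rate_def
  proof (rule cSup_eq_maximum)
    show "worst_root_mod mu L m dp \<in> alg_rate m dp ` {A. sym_spec ndim mu L A}"
      using A0_props[OF lam0(1) assms(5)] lam0(2) by (metis image_eqI mem_Collect_eq)
    show "\<And>x. x \<in> alg_rate m dp ` {A. sym_spec ndim mu L A} \<Longrightarrow> x \<le> worst_root_mod mu L m dp"
      using alg_rate_le[OF assms(1-4) _ assms(5)] by auto
  qed
qed



lemma subseq_coords:
  fixes f :: "nat \<Rightarrow> nat \<Rightarrow> real"
  assumes "\<And>k i. \<bar>f k i\<bar> \<le> B i"
  shows "\<exists>r l. strict_mono r \<and> (\<forall>i<N. (\<lambda>k. f (r k) i) \<longlonglongrightarrow> l i)"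
proof (induction N)
  case 0
  have "strict_mono (id :: nat \<Rightarrow> nat)" by (simp add: strict_mono_def)
  then show ?case by blast
next
  case (Suc N)
  then obtain r l where rl: "strict_mono r" "\<forall>i<N. (\<lambda>k. f (r k) i) \<longlonglongrightarrow> l i" by blast
  have "compact {- B N .. B N}" by simp
  hence "seq_compact {- B N .. B N}" by (simp add: compact_eq_seq_compact_metric)
  moreover have "\<forall>k. f (r k) N \<in> {- B N .. B N}"
  proof
    fix k show "f (r k) N \<in> {- B N .. B N}" using assms[of "r k" N] by (auto simp: abs_le_iff)
  qed
  ultimately obtain l' r' where r': "strict_mono r'" "((\<lambda>k. f (r k) N) \<circ> r') \<longlonglongrightarrow> l'"
    unfolding seq_compact_def by metis
  show ?case
  proof (intro exI conjI allI impI)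
    show "strict_mono (r \<circ> r')" using rl(1) r'(1) by (rule strict_mono_o)
    fix i assume i: "i < Suc N"
    show "(\<lambda>k. f ((r \<circ> r') k) i) \<longlonglongrightarrow> (l(N := l')) i"
    proof (cases "i = N")
      case True then show ?thesis using r'(2) by (simp add: o_def)
    next
      case False
      then have "i < N" using i by simp
      from LIMSEQ_subseq_LIMSEQ[OF rl(2)[rule_format, OF this] r'(1)]
      show ?thesis using False by (simp add: o_def)
    qed
  qed
qed

lemma poly_sum_upto:
  fixes p :: "complex poly"
  assumes "degree p \<le> n"
  shows "poly p z = (\<Sum>i\<le>n. coeff p i * z ^ i)"
proof -
  have "(\<Sum>i\<le>n. coeff p i * z ^ i) = (\<Sum>i\<le>degree p. coeff p i * z ^ i)"
    by (rule sum.mono_neutral_right) (use assms in \<open>auto simp: coeff_eq_0\<close>)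
  then show ?thesis by (simp add: poly_altdef)
qed

lemma exists_min:
  assumes m1: "lead_coeff m = 1" and m2: "degree m \<ge> 1" and mu: "0 < mu" "mu \<le> L"
  shows "\<exists>d0. degree d0 < degree m \<and>
     (\<forall>dp. degree dp < degree m \<longrightarrow> worst_root_mod mu L m d0 \<le> worst_root_mod mu L m dp)"
proof -
  define n where "n = degree m"
  define D where "D = {dp :: real poly. degree dp < n}"
  define W where "W = worst_root_mod mu L m"
  have W0: "0 \<le> W dp" if "dp \<in> D" for dp
    using worst_eq(3)[OF m1 _ m2 mu(2)] that unfolding D_def W_def n_def by auto
  define r where "r = Inf (W ` D)"
  have D0: "0 \<in> D" using m2 unfolding D_def n_def by auto
  have bdd: "bdd_below (W ` D)" by (rule bdd_belowI[of _ 0]) (use W0 in auto)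
  have rle: "r \<le> W dp" if "dp \<in> D" for dp unfolding r_def using bdd that by (intro cInf_lower) auto
  have r0: "0 \<le> r" unfolding r_def using D0 W0 by (intro cInf_greatest) auto
  have "\<forall>k. \<exists>dp. dp \<in> D \<and> W dp < r + 1 / real (Suc k)"
  proof
    fix k
    have "Inf (W ` D) < r + 1 / real (Suc k)" unfolding r_def by simp
    from cInf_lessD[OF _ this] show "\<exists>dp. dp \<in> D \<and> W dp < r + 1 / real (Suc k)" using D0 by auto
  qed
  then obtain f where f: "\<And>k. f k \<in> D" "\<And>k. W (f k) < r + 1 / real (Suc k)"
    using choice[of "\<lambda>k dp. dp \<in> D \<and> W dp < r + 1 / real (Suc k)"] by blast
  have props: "lead_coeff m = 1" "degree (f k) < degree m" "degree m \<ge> 1" for k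
    using m1 m2 f(1) unfolding D_def n_def by auto
  define Bc where "Bc i = (\<bar>coeff m i\<bar> + (2 + r) ^ n) / mu" for i
  have bound: "\<bar>coeff (f k) i\<bar> \<le> Bc i" for k i
  proof -
    let ?q = "cpoly (m - Polynomial.smult mu (f k))"
    have d: "degree ?q = n" "lead_coeff ?q = 1" using P_props[OF props(1) props(2)[of k]] n_def by auto
    have "\<forall>a. poly ?q a = 0 \<longrightarrow> norm a \<le> r + 1"
    proof (intro allI impI)
      fix a assume "poly ?q a = 0"
      hence "a \<in> root_set m (f k) mu" unfolding root_set_def by simp
      hence "norm a \<le> max_root_mod m (f k) mu" by (rule max_root_mod_props(2)[OF props])
      also have "\<dots> \<le> W (f k)" unfolding W_def using mu by (intro worst_eq(2)[OF props]) auto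
      also have "\<dots> < r + 1 / real (Suc k)" by (rule f(2))
      also have "\<dots> \<le> r + 1" by (simp add: divide_le_eq)
      finally show "norm a \<le> r + 1" by simp
    qed
    from coeff_bound_roots[OF d(2) _ this, of i] r0
    have "norm (coeff ?q i) \<le> (2 + r) ^ n" using d(1) by (simp add: add.assoc[symmetric])
    moreover have "norm (coeff ?q i) = \<bar>coeff m i - mu * coeff (f k) i\<bar>"
      unfolding coeff_cpoly norm_of_real by simp
    ultimately have "mu * \<bar>coeff (f k) i\<bar> \<le> \<bar>coeff m i\<bar> + (2 + r) ^ n"
      using mu(1) by (simp add: abs_mult)
    thus ?thesis unfolding Bc_def using mu(1) by (simp add: field_simps)
  qed
  obtain s e where se: "strict_mono s" "\<forall>i<n. (\<lambda>k. coeff (f (s k)) i) \<longlonglongrightarrow> e i"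
    using subseq_coords[of "\<lambda>k i. coeff (f k) i" Bc n] bound by blast
  define d0 where "d0 = (\<Sum>i<n. monom (e i) i)"
  have cd0: "coeff d0 j = (if j < n then e j else 0)" for j
    unfolding d0_def by (simp add: coeff_sum coeff_monom)
  have "degree d0 \<le> n - 1" using cd0 by (intro degree_le) auto
  hence dd0: "degree d0 < n" using m2 n_def by linarith
  have conv: "(\<lambda>k. coeff (f (s k)) j) \<longlonglongrightarrow> coeff d0 j" for j
  proof (cases "j < n")
    case True then show ?thesis using se(2) cd0 by simp
  next
    case False
    have "coeff (f (s k)) j = 0" for k using f(1)[of "s k"] False unfolding D_def
      by (intro coeff_eq_0) auto
    then show ?thesis using False cd0 by simp
  qed
  have d0D: "d0 \<in> D" using dd0 unfolding D_def by simp
  have props0: "lead_coeff m = 1" "degree d0 < degree m" "degree m \<ge> 1"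
    using m1 m2 dd0 n_def by auto
  obtain lam0 where lam0: "lam0 \<in> {mu..L}" "W d0 = max_root_mod m d0 lam0"
    using worst_eq(1)[OF props0 mu(2)] unfolding W_def by blast
  obtain z where z: "z \<in> root_set m d0 lam0" "max_root_mod m d0 lam0 = norm z"
    using max_root_mod_props(1)[OF props0, of lam0] by auto
  define pk where "pk k = poly (cpoly (m - Polynomial.smult lam0 (f (s k)))) z" for k
  have degle: "degree (m - Polynomial.smult lam0 p) \<le> n" if "degree p < n" for p
    using that unfolding n_def
    by (metis degree_diff_le degree_smult_le le_less_trans less_imp_le order.refl)
  have pk_eq: "pk k = (\<Sum>i\<le>n. of_real (coeff m i - lam0 * coeff (f (s k)) i) * z ^ i)" for k
    unfolding pk_def
    by (subst poly_sum_upto[of _ n]) (use degle f(1)[of "s k"] in \<open>auto simp: D_def degree_cpoly coeff_cpoly\<close>)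
  have p0_eq: "poly (cpoly (m - Polynomial.smult lam0 d0)) z =
      (\<Sum>i\<le>n. of_real (coeff m i - lam0 * coeff d0 i) * z ^ i)"
    by (subst poly_sum_upto[of _ n]) (use degle dd0 in \<open>auto simp: degree_cpoly coeff_cpoly\<close>)
  have "pk \<longlonglongrightarrow> poly (cpoly (m - Polynomial.smult lam0 d0)) z"
    unfolding pk_eq p0_eq
    by (intro tendsto_intros conv)
  moreover have "poly (cpoly (m - Polynomial.smult lam0 d0)) z = 0" using z(1) unfolding root_set_def by simp
  ultimately have pk0: "pk \<longlonglongrightarrow> 0" by simp
  have "norm z \<le> r"
  proof (rule field_le_epsilon)
    fix eps :: real assume eps: "0 < eps"
    define dl where "dl = eps / 2"
    have dl: "0 < dl" using eps unfolding dl_def by simp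
    have dln: "0 < dl ^ n" using dl by simp
    obtain N1 where N1: "\<forall>k\<ge>N1. norm (pk k - 0) < dl ^ n" using LIMSEQ_D[OF pk0 dln] by blast
    obtain K where K: "inverse (of_nat (Suc K)) < dl" using reals_Archimedean[OF dl] by auto
    define k where "k = max N1 K"
    have sk: "k \<le> s k" using seq_suble[OF se(1)] .
    let ?q = "cpoly (m - Polynomial.smult lam0 (f (s k)))"
    have d: "degree ?q = n" "lead_coeff ?q = 1" using P_props[OF props(1) props(2)[of "s k"]] n_def by auto
    obtain a where a: "poly ?q a = 0" "norm (z - a) ^ n \<le> norm (poly ?q z)"
      using near_root[OF d(2)] d(1) m2 n_def by auto
    have "norm (poly ?q z) < dl ^ n" using N1 unfolding k_def pk_def by auto
    hence "norm (z - a) ^ n < dl ^ n" using a(2) by simp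
    hence za: "norm (z - a) < dl" by (rule power_less_imp_less_base) (use dl in auto)
    have "a \<in> root_set m (f (s k)) lam0" using a(1) unfolding root_set_def by simp
    hence "norm a \<le> max_root_mod m (f (s k)) lam0" by (rule max_root_mod_props(2)[OF props])
    also have "\<dots> \<le> W (f (s k))" unfolding W_def using lam0(1) by (intro worst_eq(2)[OF props mu(2)])
    also have "\<dots> < r + 1 / real (Suc (s k))" by (rule f(2))
    finally have na: "norm a < r + 1 / real (Suc (s k))" .
    have "K \<le> s k" using sk unfolding k_def by simp
    hence "1 / real (Suc (s k)) \<le> inverse (of_nat (Suc K))"
      by (simp add: divide_simps)
    hence "norm a < r + dl" using K na by simp
    moreover have "norm z \<le> norm a + norm (z - a)"
      using norm_triangle_ineq[of a "z - a"] by simp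
    ultimately show "norm z \<le> r + eps" using za unfolding dl_def by simp
  qed
  hence "W d0 \<le> r" using lam0 z by simp
  hence "\<forall>dp. degree dp < degree m \<longrightarrow> W d0 \<le> W dp" using rle unfolding D_def n_def by force
  thus ?thesis using dd0 n_def W_def by blast
qed


theorem lemma2:
  fixes mu L :: real and m :: "real poly" and ndim :: nat
  assumes "0 < mu" and "mu < L"
    and "lead_coeff m = 1" and "degree m \<ge> 1"
    and "\<forall>z. poly (cpoly m) z = 0 \<longrightarrow> norm z = 1"
    and "ndim \<ge> 1"
  shows "(\<forall>dp A. degree dp < degree m \<longrightarrow> sym_spec ndim mu L A \<longrightarrow>
            closed_loop_poles m dp A =
              (\<Union>lam\<in>{lam. eigenvalue (map_mat complex_of_real A) (complex_of_real lam)}.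
                 root_set m dp lam))
       \<and> (\<forall>dp. degree dp < degree m \<longrightarrow>
            (\<exists>lam\<in>{mu..L}. max_root_mod m dp lam = worst_root_mod mu L m dp))
       \<and> (\<exists>d0. degree d0 < degree m
            \<and> (\<forall>dp. degree dp < degree m \<longrightarrow> worst_root_mod mu L m d0 \<le> worst_root_mod mu L m dp)
            \<and> optimal_rate ndim mu L m = worst_root_mod mu L m d0)"
proof -
  have mL: "mu \<le> L" using assms(2) by simp
  have P1: "\<forall>dp A. degree dp < degree m \<longrightarrow> sym_spec ndim mu L A \<longrightarrow>
            closed_loop_poles m dp A =
              (\<Union>lam\<in>{lam. eigenvalue (map_mat complex_of_real A) (complex_of_real lam)}.
                 root_set m dp lam)"
    using poles_eq[OF _ assms(6)] by blast
  have P2: "\<forall>dp. degree dp < degree m \<longrightarrow>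
            (\<exists>lam\<in>{mu..L}. max_root_mod m dp lam = worst_root_mod mu L m dp)"
  proof (intro allI impI)
    fix dp :: "real poly" assume d: "degree dp < degree m"
    from worst_eq(1)[OF assms(3) d assms(4) mL]
    show "\<exists>lam\<in>{mu..L}. max_root_mod m dp lam = worst_root_mod mu L m dp" by auto
  qed
  obtain d0 where d0: "degree d0 < degree m"
    "\<forall>dp. degree dp < degree m \<longrightarrow> worst_root_mod mu L m d0 \<le> worst_root_mod mu L m dp"
    using exists_min[OF assms(3) assms(4) assms(1) mL] by blast
  have img: "worst_rate ndim mu L m ` {dp. degree dp < degree m} =
      worst_root_mod mu L m ` {dp. degree dp < degree m}"
    by (intro image_cong refl) (auto simp: worst_rate_eq[OF assms(3) _ assms(4) mL assms(6)])
  have "optimal_rate ndim mu L m = worst_root_mod mu L m d0"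
    unfolding optimal_rate_def img
    by (rule cInf_eq_minimum) (use d0 in auto)
  with P1 P2 d0 show ?thesis by blast
qed

end
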